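(* For every integer $m\geq 2$ and every integer $n\geq 2$, the graph $mB_n$ (the disjoint union of $m$ copies of the book graph $B_n$) is $C_4$-supermagic.
   Context: All graphs are finite and simple. For a graph $H$, a graph $G=(V,E)$ has an $H$-covering if every edge of $G$ belongs to a subgraph of $G$ isomorphic to $H$. For such $G$, an $H$-magic labeling is a bijection $\lambda: V\cup E\to\{1,2,\dots,|V|+|E|\}$ for which there is a constant $c$ such that for every subgraph $H'=(V',E')$ of $G$ isomorphic to $H$, $\sum_{v\in V'}\lambda(v)+\sum_{e\in E'}\lambda(e)=c$. It is $H$-supermagic if moreover $\{\lambda(v):v\in V\}=\{1,\dots,|V|\}$; $G$ is $H$-supermagic if it admits such a labeling. $C_k$ is the cycle of length $k$. $mG$ denotes the disjoint union of $m$ copies of $G$. The book graph $B_n=K_{1,n}\times K_2$ has vertices $u_1,u_2,v_i,w_i$ ($1\le i\le n$) and edges $u_1u_2$, and $u_1w_i$, $u_2v_i$, $v_iw_i$ ($1\le i\le n$). *)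

theory Defs
  imports Main
begin

definition simple_graph :: "'a set \<Rightarrow> 'a set set \<Rightarrow> bool" where
  "simple_graph V E \<longleftrightarrow> finite V \<and>
     (\<forall>e\<in>E. \<exists>u v. u \<noteq> v \<and> u \<in> V \<and> v \<in> V \<and> e = {u, v})"

definition graph_iso :: "'b set \<Rightarrow> 'b set set \<Rightarrow> 'a set \<Rightarrow> 'a set set \<Rightarrow> bool" where
  "graph_iso VH EH V' E' \<longleftrightarrow>
     (\<exists>f. bij_betw f VH V' \<and>
          (\<forall>e\<in>E'. e \<subseteq> V') \<and>
          (\<forall>a\<in>VH. \<forall>b\<in>VH. {a, b} \<in> EH \<longleftrightarrow> {f a, f b} \<in> E'))"

definition iso_subgraphs ::
  "'b set \<Rightarrow> 'b set set \<Rightarrow> 'a set \<Rightarrow> 'a set set \<Rightarrow> ('a set \<times> 'a set set) set" where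
  "iso_subgraphs VH EH V E =
     {(V', E'). V' \<subseteq> V \<and> E' \<subseteq> E \<and> (\<forall>e\<in>E'. e \<subseteq> V') \<and> graph_iso VH EH V' E'}"

definition H_covering :: "'b set \<Rightarrow> 'b set set \<Rightarrow> 'a set \<Rightarrow> 'a set set \<Rightarrow> bool" where
  "H_covering VH EH V E \<longleftrightarrow>
     (\<forall>e\<in>E. \<exists>(V', E') \<in> iso_subgraphs VH EH V E. e \<in> E')"

text \<open>Labels are given on the disjoint sum of vertices (Inl) and edges (Inr).\<close>
definition H_magic_labeling ::
  "'b set \<Rightarrow> 'b set set \<Rightarrow> 'a set \<Rightarrow> 'a set set \<Rightarrow> ('a + 'a set \<Rightarrow> nat) \<Rightarrow> bool" where
  "H_magic_labeling VH EH V E lam \<longleftrightarrow>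
     bij_betw lam (Inl ` V \<union> Inr ` E) {1 .. card V + card E} \<and>
     (\<exists>c. \<forall>(V', E') \<in> iso_subgraphs VH EH V E.
            (\<Sum>v\<in>V'. lam (Inl v)) + (\<Sum>e\<in>E'. lam (Inr e)) = c)"

definition H_supermagic_labeling ::
  "'b set \<Rightarrow> 'b set set \<Rightarrow> 'a set \<Rightarrow> 'a set set \<Rightarrow> ('a + 'a set \<Rightarrow> nat) \<Rightarrow> bool" where
  "H_supermagic_labeling VH EH V E lam \<longleftrightarrow>
     H_magic_labeling VH EH V E lam \<and> (\<lambda>v. lam (Inl v)) ` V = {1 .. card V}"

definition H_supermagic :: "'b set \<Rightarrow> 'b set set \<Rightarrow> 'a set \<Rightarrow> 'a set set \<Rightarrow> bool" where
  "H_supermagic VH EH V E \<longleftrightarrow>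
     H_covering VH EH V E \<and> (\<exists>lam. H_supermagic_labeling VH EH V E lam)"

definition cycle_V :: "nat \<Rightarrow> nat set" where
  "cycle_V k = {0..<k}"
definition cycle_E :: "nat \<Rightarrow> nat set set" where
  "cycle_E k = {{i, (i + 1) mod k} | i. i < k}"

datatype book_vertex = U1 | U2 | Vb nat | Wb nat

definition book_V :: "nat \<Rightarrow> book_vertex set" where
  "book_V n = {U1, U2} \<union> Vb ` {1..n} \<union> Wb ` {1..n}"
definition book_E :: "nat \<Rightarrow> book_vertex set set" where
  "book_E n = {{U1, U2}} \<union> (\<lambda>i. {U1, Wb i}) ` {1..n} \<union> (\<lambda>i. {U2, Vb i}) ` {1..n}
              \<union> (\<lambda>i. {Vb i, Wb i}) ` {1..n}"

definition copies_V :: "nat \<Rightarrow> 'a set \<Rightarrow> (nat \<times> 'a) set" where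
  "copies_V m V = (\<Union>j\<in>{1..m}. (\<lambda>x. (j, x)) ` V)"
definition copies_E :: "nat \<Rightarrow> 'a set set \<Rightarrow> (nat \<times> 'a) set set" where
  "copies_E m E = (\<Union>j\<in>{1..m}. (\<lambda>e. (\<lambda>x. (j, x)) ` e) ` E)"

end

theory Submission
  imports Defs
begin


fun bad :: "nat \<Rightarrow> book_vertex \<Rightarrow> book_vertex \<Rightarrow> bool" where
  "bad n U1 U2 = True"
| "bad n U2 U1 = True"
| "bad n U1 (Wb i) = (1 \<le> i \<and> i \<le> n)"
| "bad n (Wb i) U1 = (1 \<le> i \<and> i \<le> n)"
| "bad n U2 (Vb i) = (1 \<le> i \<and> i \<le> n)"
| "bad n (Vb i) U2 = (1 \<le> i \<and> i \<le> n)"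
| "bad n (Vb i) (Wb k) = (i = k \<and> 1 \<le> i \<and> i \<le> n)"
| "bad n (Wb i) (Vb k) = (i = k \<and> 1 \<le> i \<and> i \<le> n)"
| "bad n _ _ = False"

lemma copies_V_eq: "copies_V m V = {1..m} \<times> V"
  unfolding copies_V_def by auto

lemma copies_E_eq: "copies_E m E = (\<lambda>(j,e). Pair j ` e) ` ({1..m} \<times> E)"
  unfolding copies_E_def by auto


lemma book_E_mem: "e \<in> book_E n \<longleftrightarrow> e = {U1,U2} \<or>
   (\<exists>i\<in>{1..n}. e = {U1,Wb i} \<or> e = {U2, Vb i} \<or> e = {Vb i, Wb i})"
  unfolding book_E_def by blast

lemma book_E_iff: "{a,b} \<in> book_E n \<longleftrightarrow> bad n a b"
  unfolding book_E_mem
  by (cases a; cases b) (auto simp: doubleton_eq_iff)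

lemma book_C4:
  assumes "bad n a0 a1" "bad n a1 a2" "bad n a2 a3" "bad n a3 a0"
    "a0 \<noteq> a2" "a1 \<noteq> a3"
  shows "\<exists>i. 1 \<le> i \<and> i \<le> n \<and>
    ((a0,a1,a2,a3) = (U1,U2,Vb i,Wb i) \<or> (a0,a1,a2,a3) = (U2,Vb i,Wb i,U1) \<or>
     (a0,a1,a2,a3) = (Vb i,Wb i,U1,U2) \<or> (a0,a1,a2,a3) = (Wb i,U1,U2,Vb i) \<or>
     (a0,a1,a2,a3) = (U1,Wb i,Vb i,U2) \<or> (a0,a1,a2,a3) = (Wb i,Vb i,U2,U1) \<or>
     (a0,a1,a2,a3) = (Vb i,U2,U1,Wb i) \<or> (a0,a1,a2,a3) = (U2,U1,Wb i,Vb i))"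
  using assms
  apply (cases a0; cases a1; simp_all)
  apply (cases a2; simp_all; cases a3; simp_all)+
  done

lemma book_C4_sets:
  assumes "bad n a0 a1" "bad n a1 a2" "bad n a2 a3" "bad n a3 a0"
    "a0 \<noteq> a2" "a1 \<noteq> a3"
  shows "\<exists>i. 1 \<le> i \<and> i \<le> n \<and> {a0,a1,a2,a3} = {U1,U2,Vb i,Wb i} \<and>
    {{a0,a1},{a1,a2},{a2,a3},{a3,a0}} = {{U1,U2},{U1,Wb i},{U2,Vb i},{Vb i,Wb i}}"
proof -
  from book_C4[OF assms] obtain i where i: "1 \<le> i" "i \<le> n" and
    c: "((a0,a1,a2,a3) = (U1,U2,Vb i,Wb i) \<or> (a0,a1,a2,a3) = (U2,Vb i,Wb i,U1) \<or>
     (a0,a1,a2,a3) = (Vb i,Wb i,U1,U2) \<or> (a0,a1,a2,a3) = (Wb i,U1,U2,Vb i) \<or>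
     (a0,a1,a2,a3) = (U1,Wb i,Vb i,U2) \<or> (a0,a1,a2,a3) = (Wb i,Vb i,U2,U1) \<or>
     (a0,a1,a2,a3) = (Vb i,U2,U1,Wb i) \<or> (a0,a1,a2,a3) = (U2,U1,Wb i,Vb i))"
    by blast
  from c have "{a0,a1,a2,a3} = {U1,U2,Vb i,Wb i} \<and>
    {{a0,a1},{a1,a2},{a2,a3},{a3,a0}} = {{U1,U2},{U1,Wb i},{U2,Vb i},{Vb i,Wb i}}"
    by (elim disjE; simp add: insert_commute)
  with i show ?thesis by blast
qed

lemma cycV4: "cycle_V 4 = {0,1,2,3}"
  unfolding cycle_V_def by auto

lemma cycE4: "cycle_E 4 = {{0,1},{1,2},{2,3},{3,0}}"
proof -
  have e: "{i. i < (4::nat)} = {0,1,2,3}" by auto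
  have a: "(0+1) mod 4 = (1::nat)" "(1+1) mod 4 = (2::nat)" "(2+1) mod 4 = (3::nat)"
    "(3+1) mod 4 = (0::nat)" by simp_all
  have "cycle_E 4 = (\<lambda>i. {i, (i+1) mod 4}) ` {i. i < (4::nat)}"
    unfolding cycle_E_def setcompr_eq_image ..
  also have "\<dots> = {{0,1},{1,2},{2,3},{3,0}}" unfolding e by (simp only: image_insert image_empty a)
  finally show ?thesis .
qed

definition lvU1 :: "nat \<Rightarrow> nat" where "lvU1 n = (if even n then n div 2 else 2*n)"

fun lv :: "nat \<Rightarrow> book_vertex \<Rightarrow> nat" where
  "lv n U1 = lvU1 n"
| "lv n U2 = 2*n+1"
| "lv n (Vb i) = (if even (i-1) then 2*(n div 2) - (i-1) div 2 else n div 2 - 1 - (i-1) div 2)"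
| "lv n (Wb i) = (if even (i-1) then 3*(n div 2) + n mod 2 - (i-1) div 2
                  else 4*(n div 2) + n mod 2 - (i-1) div 2)"

lemma lv_V_odd: "lv n (Vb (2*t+2)) = n div 2 - 1 - t" by simp
lemma lv_V_even: "lv n (Vb (2*t+1)) = 2*(n div 2) - t" by simp
lemma lv_W_even: "lv n (Wb (2*t+1)) = 3*(n div 2) + n mod 2 - t" by simp
lemma lv_W_odd: "lv n (Wb (2*t+2)) = 4*(n div 2) + n mod 2 - t" by simp

lemma book_V_mem: "x \<in> book_V n \<longleftrightarrow> x = U1 \<or> x = U2 \<or> (\<exists>i\<in>{1..n}. x = Vb i \<or> x = Wb i)"
  unfolding book_V_def by auto

lemma idx_cases:
  fixes i :: nat
  assumes "1 \<le> i"
  obtains t where "i = 2*t+1" | t where "i = 2*t+2"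
proof (cases "even (i - 1)")
  case True
  then obtain t where "i - 1 = 2*t" by (rule evenE)
  then have "i = 2*t+1" using assms by arith
  then show ?thesis by (rule that(1))
next
  case False
  then obtain t where "i - 1 = 2*t+1" by (rule oddE)
  then have "i = 2*t+2" using assms by arith
  then show ?thesis by (rule that(2))
qed

lemma lv_range:
  assumes "x \<in> book_V n"
  shows "lv n x < 2*n+2"
proof -
  have ns: "n = 2*(n div 2) + n mod 2" by simp
  have r: "n mod 2 \<le> 1" by simp
  show ?thesis
  proof (cases x)
    case U1
    have "n div 2 < 2*n+2" using div_le_dividend[of n 2] by linarith
    then show ?thesis using U1 by (simp add: lvU1_def)
  next
    case U2 then show ?thesis by simp
  next
    case (Vb i)
    have "lv n (Vb i) \<le> 2*(n div 2)" by auto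
    moreover have "2*(n div 2) \<le> n" by simp
    ultimately have "lv n (Vb i) < 2*n+2" by linarith
    then show ?thesis by (simp only: Vb)
  next
    case (Wb i)
    have "lv n (Wb i) \<le> 4*(n div 2) + n mod 2" by auto
    moreover have "4*(n div 2) + n mod 2 \<le> 2*n" using div_mult_mod_eq[of n 2] by linarith
    ultimately have "lv n (Wb i) < 2*n+2" by linarith
    then show ?thesis by (simp only: Wb)
  qed
qed

lemma lv_onto:
  assumes "y < 2*n+2"
  shows "\<exists>x\<in>book_V n. lv n x = y"
proof -
  define s where "s = n div 2"
  have Vmem: "Vb i \<in> book_V n" if "1 \<le> i" "i \<le> n" for i
    using that unfolding book_V_def by auto
  have Wmem: "Wb i \<in> book_V n" if "1 \<le> i" "i \<le> n" for i
    using that unfolding book_V_def by auto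
  have U1m: "U1 \<in> book_V n" and U2m: "U2 \<in> book_V n" unfolding book_V_def by auto
  have U2v: "lv n U2 = 2*n+1" by simp
  show ?thesis
  proof (cases "even n")
    case True
    then have n2: "n = 2*s" unfolding s_def by auto
    have U1v: "lv n U1 = s" using True by (simp add: lvU1_def s_def)
    consider "y < s" | "y = s" | "s < y \<and> y \<le> 2*s" | "2*s < y \<and> y \<le> 3*s"
      | "3*s < y \<and> y \<le> 4*s" | "y = 4*s+1" using assms n2 by linarith
    then show ?thesis
    proof cases
      case 1
      have "lv n (Vb (2*(s-1-y)+2)) = y" using 1 by (simp add: lv_V_odd s_def[symmetric])
      moreover have "Vb (2*(s-1-y)+2) \<in> book_V n" using 1 n2 by (intro Vmem) auto
      ultimately show ?thesis by blast
    next
      case 2 then show ?thesis using U1v U1m by blast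
    next
      case 3
      have "lv n (Vb (2*(2*s-y)+1)) = y" using 3 by (simp add: lv_V_even s_def[symmetric])
      moreover have "Vb (2*(2*s-y)+1) \<in> book_V n" using 3 n2 by (intro Vmem) auto
      ultimately show ?thesis by blast
    next
      case 4
      have "lv n (Wb (2*(3*s-y)+1)) = y" using 4 True by (simp add: lv_W_even s_def[symmetric])
      moreover have "Wb (2*(3*s-y)+1) \<in> book_V n" using 4 n2 by (intro Wmem) auto
      ultimately show ?thesis by blast
    next
      case 5
      have "lv n (Wb (2*(4*s-y)+2)) = y" using 5 True by (simp add: lv_W_odd s_def[symmetric])
      moreover have "Wb (2*(4*s-y)+2) \<in> book_V n" using 5 n2 by (intro Wmem) auto
      ultimately show ?thesis by blast
    next
      case 6 then have "lv n U2 = y" using n2 by simp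
      then show ?thesis using U2m by blast
    qed
  next
    case False
    then have n2: "n = 2*s+1" unfolding s_def by (metis odd_two_times_div_two_succ)
    have r: "n mod 2 = 1" using False by presburger
    have U1v: "lv n U1 = 2*n" using False by (simp add: lvU1_def)
    consider "y < s" | "s \<le> y \<and> y \<le> 2*s" | "2*s < y \<and> y \<le> 3*s+1"
      | "3*s+1 < y \<and> y \<le> 4*s+1" | "y = 4*s+2" | "y = 4*s+3" using assms n2 by linarith
    then show ?thesis
    proof cases
      case 1
      have "lv n (Vb (2*(s-1-y)+2)) = y" using 1 by (simp add: lv_V_odd s_def[symmetric])
      moreover have "Vb (2*(s-1-y)+2) \<in> book_V n" using 1 n2 by (intro Vmem) auto
      ultimately show ?thesis by blast
    next
      case 2
      have "lv n (Vb (2*(2*s-y)+1)) = y" using 2 by (simp add: lv_V_even s_def[symmetric])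
      moreover have "Vb (2*(2*s-y)+1) \<in> book_V n" using 2 n2 by (intro Vmem) auto
      ultimately show ?thesis by blast
    next
      case 3
      have "lv n (Wb (2*(3*s+1-y)+1)) = y" using 3 r by (simp add: lv_W_even s_def[symmetric])
      moreover have "Wb (2*(3*s+1-y)+1) \<in> book_V n" using 3 n2 by (intro Wmem) auto
      ultimately show ?thesis by blast
    next
      case 4
      have "lv n (Wb (2*(4*s+1-y)+2)) = y" using 4 r by (simp add: lv_W_odd s_def[symmetric])
      moreover have "Wb (2*(4*s+1-y)+2) \<in> book_V n" using 4 n2 by (intro Wmem) auto
      ultimately show ?thesis by blast
    next
      case 5 then have "lv n U1 = y" using U1v n2 by simp
      then show ?thesis using U1m by blast
    next
      case 6 then have "lv n U2 = y" using n2 by simp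
      then show ?thesis using U2m by blast
    qed
  qed
qed

lemma lv_image: "lv n ` book_V n = {0..<2*n+2}"
  using lv_range lv_onto by fastforce

fun bidx :: "book_vertex \<Rightarrow> nat" where
  "bidx U1 = 0" | "bidx U2 = 0" | "bidx (Vb i) = i" | "bidx (Wb i) = i"

definition le :: "nat \<Rightarrow> book_vertex set \<Rightarrow> nat" where
  "le n e = (if e = {U1,U2} then 3*n else if U1 \<in> e then Max (bidx ` e) - 1
     else if U2 \<in> e then 2*n - Max (bidx ` e) else 2*n + Max (bidx ` e) - 1)"

lemma le_h: "le n {U1,U2} = 3*n" by (simp add: le_def)
lemma le_1: "le n {U1,Wb i} = i - 1" by (simp add: le_def doubleton_eq_iff)
lemma le_2: "le n {U2,Vb i} = 2*n - i" by (simp add: le_def doubleton_eq_iff)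
lemma le_3: "le n {Vb i,Wb i} = 2*n + i - 1" by (simp add: le_def doubleton_eq_iff)

lemma le_image: "le n ` book_E n = {0..<3*n+1}"
proof
  show "le n ` book_E n \<subseteq> {0..<3*n+1}"
    by (auto simp: book_E_mem le_h le_1 le_2 le_3) arith+
next
  show "{0..<3*n+1} \<subseteq> le n ` book_E n"
  proof
    fix y assume "y \<in> {0..<3*n+1}"
    then have y: "y < 3*n+1" by simp
    consider "y < n" | "n \<le> y \<and> y < 2*n" | "2*n \<le> y \<and> y < 3*n" | "y = 3*n"
      using y by linarith
    then show "y \<in> le n ` book_E n"
    proof cases
      case 1
      have "{U1, Wb (y+1)} \<in> book_E n" using 1 by (auto simp: book_E_mem)
      moreover have "le n {U1, Wb (y+1)} = y" by (simp add: le_1)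
      ultimately show ?thesis by (metis image_eqI)
    next
      case 2
      have mem: "2*n - y \<in> {1..n}" using 2 by auto
      have "{U2, Vb (2*n-y)} \<in> book_E n" unfolding book_E_mem using mem by blast
      moreover have "le n {U2, Vb (2*n-y)} = y" using 2 by (simp add: le_2)
      ultimately show ?thesis by (metis image_eqI)
    next
      case 3
      have "{Vb (y-2*n+1), Wb (y-2*n+1)} \<in> book_E n" using 3 by (auto simp: book_E_mem)
      moreover have "le n {Vb (y-2*n+1), Wb (y-2*n+1)} = y" using 3 by (simp add: le_3)
      ultimately show ?thesis by (metis image_eqI)
    next
      case 4
      have "{U1,U2} \<in> book_E n" by (auto simp: book_E_mem)
      moreover have "le n {U1,U2} = y" using 4 by (simp add: le_h)
      ultimately show ?thesis by (metis image_eqI)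
    qed
  qed
qed

lemma card_book_V: "card (book_V n) = 2*n+2"
proof -
  have "book_V n = {U1,U2} \<union> (Vb ` {1..n} \<union> Wb ` {1..n})" unfolding book_V_def by auto
  moreover have "card (Vb ` {1..n}) = n" by (simp add: card_image inj_on_def)
  moreover have "card (Wb ` {1..n}) = n" by (simp add: card_image inj_on_def)
  moreover have "card (Vb ` {1..n} \<union> Wb ` {1..n}) = card (Vb ` {1..n}) + card (Wb ` {1..n})"
    by (rule card_Un_disjoint) auto
  moreover have "card ({U1,U2} \<union> (Vb ` {1..n} \<union> Wb ` {1..n})) =
     card {U1,U2} + card (Vb ` {1..n} \<union> Wb ` {1..n})"
    by (rule card_Un_disjoint) auto
  ultimately show ?thesis by simp
qed

lemma card_book_E: "card (book_E n) = 3*n+1"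
proof -
  let ?A = "(\<lambda>i. {U1, Wb i}) ` {1..n}" and ?B = "(\<lambda>i. {U2, Vb i}) ` {1..n}"
    and ?C = "(\<lambda>i. {Vb i, Wb i}) ` {1..n}"
  have e: "book_E n = {{U1,U2}} \<union> (?A \<union> (?B \<union> ?C))" unfolding book_E_def by auto
  have a: "card ?A = n" by (simp add: card_image inj_on_def doubleton_eq_iff)
  have b: "card ?B = n" by (simp add: card_image inj_on_def doubleton_eq_iff)
  have c: "card ?C = n" by (simp add: card_image inj_on_def doubleton_eq_iff)
  have bc: "card (?B \<union> ?C) = card ?B + card ?C"
    by (rule card_Un_disjoint) (auto simp: doubleton_eq_iff)
  have abc: "card (?A \<union> (?B \<union> ?C)) = card ?A + card (?B \<union> ?C)"
    by (rule card_Un_disjoint) (auto simp: doubleton_eq_iff)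
  have all: "card ({{U1,U2}} \<union> (?A \<union> (?B \<union> ?C))) = 1 + card (?A \<union> (?B \<union> ?C))"
    by (subst card_Un_disjoint) (auto simp: doubleton_eq_iff)
  show ?thesis unfolding e all abc bc a b c by simp
qed

lemma bij_by_card: "finite A \<Longrightarrow> card A = card B \<Longrightarrow> f ` A = B \<Longrightarrow> bij_betw f A B"
  by (metis bij_betw_def eq_card_imp_inj_on)

definition slot :: "nat \<Rightarrow> bool \<Rightarrow> nat \<Rightarrow> nat" where
  "slot m p j = (if p then j - 1 else m - j)"

lemma prod_image:
  assumes f: "f ` A = {0..<a}"
  shows "(\<lambda>(j,x). m * f x + slot m (p x) j) ` ({1..m} \<times> A) = {0..<m*a}"
proof
  show "(\<lambda>(j,x). m * f x + slot m (p x) j) ` ({1..m} \<times> A) \<subseteq> {0..<m*a}"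
  proof
    fix y assume "y \<in> (\<lambda>(j,x). m * f x + slot m (p x) j) ` ({1..m} \<times> A)"
    then obtain j x where j: "1 \<le> j" "j \<le> m" and x: "x \<in> A"
      and yd: "y = m * f x + slot m (p x) j" by auto
    have "f x < a" using f x by auto
    then have "m * (f x + 1) \<le> m * a" by (intro mult_le_mono2) simp
    moreover have "slot m (p x) j < m" using j by (auto simp: slot_def)
    ultimately have "m * f x + slot m (p x) j < m * a" by (simp add: algebra_simps)
    then show "y \<in> {0..<m*a}" using yd by simp
  qed
next
  show "{0..<m*a} \<subseteq> (\<lambda>(j,x). m * f x + slot m (p x) j) ` ({1..m} \<times> A)"
  proof
    fix y assume "y \<in> {0..<m*a}"
    then have y: "y < m*a" by simp
    then have m0: "0 < m" by (cases m) auto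
    have "y div m < a" using y m0 by (simp add: div_less_iff_less_mult mult.commute)
    then obtain x where x: "x \<in> A" "f x = y div m" using f by (metis atLeastLessThan_iff imageE zero_le)
    define j where "j = (if p x then y mod m + 1 else m - y mod m)"
    have ym: "y mod m < m" using m0 by simp
    have j: "j \<in> {1..m}" using ym unfolding j_def by auto
    have s: "slot m (p x) j = y mod m" using ym unfolding j_def slot_def by auto
    have "m * f x + slot m (p x) j = y" unfolding s x(2) by simp
    then show "y \<in> (\<lambda>(j,x). m * f x + slot m (p x) j) ` ({1..m} \<times> A)"
      using j x(1) by force
  qed
qed

lemma shift_image: "(\<lambda>z. c + z + 1) ` {0..<k} = {c+1..c+(k::nat)}"
proof
  show "(\<lambda>z. c + z + 1) ` {0..<k} \<subseteq> {c+1..c+k}" by auto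
next
  show "{c+1..c+k} \<subseteq> (\<lambda>z. c + z + 1) ` {0..<k}"
  proof
    fix y assume "y \<in> {c+1..c+k}"
    then have "y = c + (y - c - 1) + 1" "y - c - 1 \<in> {0..<k}" by auto
    then show "y \<in> (\<lambda>z. c + z + 1) ` {0..<k}" by (metis image_eqI)
  qed
qed



fun vplus :: "book_vertex \<Rightarrow> bool" where
  "vplus U1 = True" | "vplus U2 = False" | "vplus (Vb i) = True" | "vplus (Wb i) = False"

definition eplus :: "book_vertex set \<Rightarrow> bool" where
  "eplus e = (e \<noteq> {U1,U2} \<and> U2 \<notin> e)"

definition vlab :: "nat \<Rightarrow> nat \<Rightarrow> nat \<times> book_vertex \<Rightarrow> nat" where
  "vlab m n v = m * lv n (snd v) + slot m (vplus (snd v)) (fst v) + 1"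

definition elab :: "nat \<Rightarrow> nat \<Rightarrow> (nat \<times> book_vertex) set \<Rightarrow> nat" where
  "elab m n e = m*(2*n+2) + m * le n (snd ` e) + slot m (eplus (snd ` e)) (fst (SOME x. x \<in> e)) + 1"

definition lam :: "nat \<Rightarrow> nat \<Rightarrow> (nat \<times> book_vertex) + (nat \<times> book_vertex) set \<Rightarrow> nat" where
  "lam m n = case_sum (vlab m n) (elab m n)"

lemma elab_pair:
  assumes "e' \<noteq> {}"
  shows "elab m n (Pair j ` e') = m*(2*n+2) + m * le n e' + slot m (eplus e') j + 1"
proof -
  have s: "snd ` Pair j ` e' = e'" by (simp add: image_image)
  have "(SOME x. x \<in> Pair j ` e') \<in> Pair j ` e'" using assms by (metis ex_in_conv imageI someI_ex)
  then have "fst (SOME x. x \<in> Pair j ` e') = j" by auto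
  then show ?thesis unfolding elab_def s by simp
qed

lemma book_E_ne: "e \<in> book_E n \<Longrightarrow> e \<noteq> {}"
  unfolding book_E_def by auto

lemma finite_book_V: "finite (book_V n)" unfolding book_V_def by auto
lemma finite_book_E: "finite (book_E n)" unfolding book_E_def by auto

definition gE :: "nat \<times> book_vertex set \<Rightarrow> (nat \<times> book_vertex) set" where
  "gE = (\<lambda>(j,e). Pair j ` e)"

lemma gE_inj: "inj_on gE ({1..m} \<times> book_E n)"
proof (rule inj_onI, clarify)
  fix j e j' e'
  assume e: "e \<in> book_E n" and e': "e' \<in> book_E n" and eq: "gE (j,e) = gE (j',e')"
  have eq2: "Pair j ` e = Pair j' ` e'" using eq by (simp add: gE_def)
  then have "snd ` Pair j ` e = snd ` Pair j' ` e'" by simp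
  then have ee: "e = e'" by (simp add: image_image)
  obtain x where "x \<in> e" using book_E_ne[OF e] by blast
  then have "(j,x) \<in> Pair j' ` e'" using eq2 by blast
  then have "j = j'" by auto
  with ee show "j = j' \<and> e = e'" by simp
qed

lemma copies_E_gE: "copies_E m (book_E n) = gE ` ({1..m} \<times> book_E n)"
  unfolding copies_E_eq gE_def ..

lemma card_V: "card (copies_V m (book_V n)) = m*(2*n+2)"
  unfolding copies_V_eq by (simp add: card_cartesian_product card_book_V)

lemma card_E: "card (copies_E m (book_E n)) = m*(3*n+1)"
  unfolding copies_E_gE using card_image[OF gE_inj]
  by (simp add: card_cartesian_product card_book_E)

lemma vimg: "vlab m n ` copies_V m (book_V n) = {1..m*(2*n+2)}"
proof -
  have "vlab m n ` copies_V m (book_V n) =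
     ((\<lambda>z. 0 + z + 1) \<circ> (\<lambda>(j,x). m * lv n x + slot m (vplus x) j)) ` ({1..m} \<times> book_V n)"
    unfolding copies_V_eq by (rule image_cong) (auto simp: vlab_def)
  also have "\<dots> = (\<lambda>z. 0 + z + 1) ` {0..<m*(2*n+2)}"
    unfolding image_comp[symmetric] prod_image[OF lv_image] ..
  finally show ?thesis unfolding shift_image by simp
qed

lemma eimg: "elab m n ` copies_E m (book_E n) = {m*(2*n+2)+1..m*(2*n+2)+m*(3*n+1)}"
proof -
  have "elab m n ` copies_E m (book_E n) = (elab m n \<circ> gE) ` ({1..m} \<times> book_E n)"
    unfolding copies_E_gE image_comp ..
  also have "\<dots> = ((\<lambda>z. m*(2*n+2) + z + 1) \<circ> (\<lambda>(j,x). m * le n x + slot m (eplus x) j))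
       ` ({1..m} \<times> book_E n)"
    by (rule image_cong) (auto simp: gE_def elab_pair book_E_ne)
  also have "\<dots> = (\<lambda>z. m*(2*n+2) + z + 1) ` {0..<m*(3*n+1)}"
    unfolding image_comp[symmetric] prod_image[OF le_image] ..
  finally show ?thesis unfolding shift_image .
qed

lemma lam_bij:
  "bij_betw (lam m n) (Inl ` copies_V m (book_V n) \<union> Inr ` copies_E m (book_E n))
     {1..card (copies_V m (book_V n)) + card (copies_E m (book_E n))}"
proof (rule bij_by_card)
  let ?V = "copies_V m (book_V n)" and ?E = "copies_E m (book_E n)"
  have fV: "finite ?V" unfolding copies_V_eq using finite_book_V by simp
  have fE: "finite ?E" unfolding copies_E_gE using finite_book_E by simp
  show "finite (Inl ` ?V \<union> Inr ` ?E)" using fV fE by simp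
  let ?A = "Inl ` ?V :: ((nat \<times> book_vertex) + (nat \<times> book_vertex) set) set"
  let ?B = "Inr ` ?E :: ((nat \<times> book_vertex) + (nat \<times> book_vertex) set) set"
  have "card (Inl ` ?V \<union> Inr ` ?E) = card ?A + card ?B"
    using card_Un_disjoint[of ?A ?B] fV fE by auto
  also have "\<dots> = card ?V + card ?E" by (simp add: card_image)
  finally show "card (Inl ` ?V \<union> Inr ` ?E) = card {1..card ?V + card ?E}" by simp
  have "lam m n ` (Inl ` ?V \<union> Inr ` ?E) = vlab m n ` ?V \<union> elab m n ` ?E"
    by (simp add: lam_def image_Un image_image)
  also have "\<dots> = {1..card ?V + card ?E}" unfolding vimg eimg card_V card_E by auto
  finally show "lam m n ` (Inl ` ?V \<union> Inr ` ?E) = {1..card ?V + card ?E}" .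
qed

lemma lam_V: "(\<lambda>v. lam m n (Inl v)) ` copies_V m (book_V n) = {1..card (copies_V m (book_V n))}"
  unfolding card_V using vimg by (simp add: lam_def)

lemma book_E_cases:
  assumes "e \<in> book_E n"
  shows "\<exists>a b. e = {a,b} \<and> a \<noteq> b \<and> bad n a b"
  using assms unfolding book_E_mem
  apply (elim disjE bexE)
  subgoal by (rule exI[of _ U1], rule exI[of _ U2]) simp
  subgoal for i by (rule exI[of _ U1], rule exI[of _ "Wb i"]) simp
  subgoal for i by (rule exI[of _ U2], rule exI[of _ "Vb i"]) simp
  subgoal for i by (rule exI[of _ "Vb i"], rule exI[of _ "Wb i"]) simp
  done

lemma edge_copies:
  assumes "{p,q} \<in> copies_E m (book_E n)"
  shows "fst p = fst q \<and> fst p \<in> {1..m} \<and> bad n (snd p) (snd q)"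
proof -
  obtain j e where j: "j \<in> {1..m}" and e: "e \<in> book_E n" and pq: "{p,q} = Pair j ` e"
    using assms unfolding copies_E_gE gE_def by auto
  have "p \<in> Pair j ` e" "q \<in> Pair j ` e" using pq by auto
  then have fp: "fst p = j" "fst q = j" by auto
  have "snd ` {p,q} = e" using pq by (simp add: image_image)
  then have "{snd p, snd q} \<in> book_E n" using e by simp
  then show ?thesis using fp j by (simp add: book_E_iff)
qed

lemma E_two:
  assumes "e \<in> copies_E m (book_E n)"
  shows "\<exists>p q. e = {p,q} \<and> p \<noteq> q"
proof -
  obtain j e' where e': "e' \<in> book_E n" and ee: "e = Pair j ` e'"
    using assms unfolding copies_E_gE gE_def by auto
  obtain a b where "e' = {a,b}" "a \<noteq> b" using book_E_cases[OF e'] by blast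
  then show ?thesis using ee by auto
qed

lemma C4_char:
  assumes "(V',E') \<in> iso_subgraphs (cycle_V 4) (cycle_E 4) (copies_V m (book_V n)) (copies_E m (book_E n))"
  shows "\<exists>j i. j \<in> {1..m} \<and> i \<in> {1..n} \<and> V' = Pair j ` {U1,U2,Vb i,Wb i} \<and>
     E' = image (Pair j) ` {{U1,U2},{U1,Wb i},{U2,Vb i},{Vb i,Wb i}}"
proof -
  from assms have sub: "E' \<subseteq> copies_E m (book_E n)" and evs: "\<forall>e\<in>E'. e \<subseteq> V'"
    and iso: "graph_iso (cycle_V 4) (cycle_E 4) V' E'"
    unfolding iso_subgraphs_def by auto
  from iso obtain f where bij: "bij_betw f {0,1,2,3} V'" and
    iff: "\<forall>a\<in>{0,1,2,3}. \<forall>b\<in>{0,1,2,3}. {a,b} \<in> {{0,1},{1,2},{2,3},{3,0::nat}} \<longleftrightarrow> {f a, f b} \<in> E'"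
    unfolding graph_iso_def cycV4 cycE4 by blast
  have e01: "{f 0, f 1} \<in> E'" using iff[rule_format, of 0 1] by simp
  have e12: "{f 1, f 2} \<in> E'" using iff[rule_format, of 1 2] by simp
  have e23: "{f 2, f 3} \<in> E'" using iff[rule_format, of 2 3] by simp
  have e30: "{f 3, f 0} \<in> E'" using iff[rule_format, of 3 0] by simp
  have fim0: "f ` {0,1,2,3} = V'" using bij by (simp add: bij_betw_def)
  have Veq: "V' = {f 0, f 1, f 2, f 3}" unfolding fim0[symmetric] by simp
  have injf: "inj_on f {0,1,2,3}" using bij by (simp add: bij_betw_def)
  have d02: "f 0 \<noteq> f 2" using inj_onD[OF injf, of 0 2] by auto
  have d13: "f 1 \<noteq> f 3" using inj_onD[OF injf, of 1 3] by auto
  note c01 = edge_copies[OF subsetD[OF sub e01]]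
  note c12 = edge_copies[OF subsetD[OF sub e12]]
  note c23 = edge_copies[OF subsetD[OF sub e23]]
  note c30 = edge_copies[OF subsetD[OF sub e30]]
  define j where "j = fst (f 0)"
  define a where "a k = snd (f k)" for k
  have fk: "f k = (j, a k)" if "k \<in> {0,1,2,3}" for k
  proof -
    have "fst (f k) = j" using that c01 c12 c23 unfolding j_def by auto
    then show ?thesis by (simp add: a_def prod_eq_iff)
  qed
  have jm: "j \<in> {1..m}" using c01 unfolding j_def by simp
  have b01: "bad n (a 0) (a 1)" and b12: "bad n (a 1) (a 2)" and b23: "bad n (a 2) (a 3)"
    and b30: "bad n (a 3) (a 0)" using c01 c12 c23 c30 unfolding a_def by auto
  have n02: "a 0 \<noteq> a 2" using d02 fk[of 0] fk[of 2] by auto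
  have n13: "a 1 \<noteq> a 3" using d13 fk[of 1] fk[of 3] by auto
  obtain i where i: "1 \<le> i" "i \<le> n" and sV: "{a 0, a 1, a 2, a 3} = {U1,U2,Vb i,Wb i}"
    and sE: "{{a 0,a 1},{a 1,a 2},{a 2,a 3},{a 3,a 0}} = {{U1,U2},{U1,Wb i},{U2,Vb i},{Vb i,Wb i}}"
    using book_C4_sets[OF b01 b12 b23 b30 n02 n13] by blast
  have V'2: "V' = Pair j ` {U1,U2,Vb i,Wb i}"
    unfolding Veq sV[symmetric] using fk by simp
  have E'eq: "E' = {{f 0, f 1}, {f 1, f 2}, {f 2, f 3}, {f 3, f 0}}"
  proof
    show "{{f 0, f 1}, {f 1, f 2}, {f 2, f 3}, {f 3, f 0}} \<subseteq> E'" using e01 e12 e23 e30 by simp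
  next
    show "E' \<subseteq> {{f 0, f 1}, {f 1, f 2}, {f 2, f 3}, {f 3, f 0}}"
    proof
      fix e assume eE: "e \<in> E'"
      obtain p q where pq: "e = {p,q}" "p \<noteq> q" using E_two[OF subsetD[OF sub eE]] by blast
      have pV: "p \<in> V'" and qV: "q \<in> V'" using evs eE pq by auto
      have fim: "f ` {0,1,2,3} = V'" using bij by (simp add: bij_betw_def)
      obtain x where x: "x \<in> {0,1,2,3}" "p = f x" using pV unfolding fim[symmetric] by (rule imageE) simp
      obtain y where y: "y \<in> {0,1,2,3}" "q = f y" using qV unfolding fim[symmetric] by (rule imageE) simp
      have "{f x, f y} \<in> E'" using eE pq x y by simp
      then have "{x,y} \<in> {{0,1},{1,2},{2,3},{3,0::nat}}" using iff[rule_format, OF x(1) y(1)] by simp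
      then have "{f x, f y} \<in> {{f 0, f 1}, {f 1, f 2}, {f 2, f 3}, {f 3, f 0}}"
        by (auto simp: doubleton_eq_iff)
      then show "e \<in> {{f 0, f 1}, {f 1, f 2}, {f 2, f 3}, {f 3, f 0}}" using pq x y by simp
    qed
  qed
  have E'2: "E' = image (Pair j) ` {{U1,U2},{U1,Wb i},{U2,Vb i},{Vb i,Wb i}}"
    unfolding E'eq sE[symmetric] using fk by simp
  from jm i V'2 E'2 show ?thesis by (intro exI[of _ j] exI[of _ i] conjI) simp_all
qed

lemma std_iso:
  assumes j: "j \<in> {1..m}" and i: "i \<in> {1..n}"
  shows "(Pair j ` {U1,U2,Vb i,Wb i}, image (Pair j) ` {{U1,U2},{U1,Wb i},{U2,Vb i},{Vb i,Wb i}})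
     \<in> iso_subgraphs (cycle_V 4) (cycle_E 4) (copies_V m (book_V n)) (copies_E m (book_E n))"
proof -
  let ?V' = "Pair j ` {U1,U2,Vb i,Wb i}"
  let ?E' = "image (Pair j) ` {{U1,U2},{U1,Wb i},{U2,Vb i},{Vb i,Wb i}}"
  have Vs: "?V' \<subseteq> copies_V m (book_V n)" using j i unfolding copies_V_eq book_V_def by auto
  have Bs: "{{U1,U2},{U1,Wb i},{U2,Vb i},{Vb i,Wb i}} \<subseteq> book_E n"
    using i by (simp add: book_E_iff)
  have Es: "?E' \<subseteq> copies_E m (book_E n)"
  proof
    fix e assume "e \<in> ?E'"
    then obtain e0 where e0: "e0 \<in> {{U1,U2},{U1,Wb i},{U2,Vb i},{Vb i,Wb i}}" and ee: "e = Pair j ` e0"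
      by blast
    have "(j,e0) \<in> {1..m} \<times> book_E n" using j e0 Bs by blast
    then show "e \<in> copies_E m (book_E n)" unfolding copies_E_gE ee
      by (rule image_eqI[rotated]) (simp add: gE_def)
  qed
  have sub: "\<forall>e\<in>?E'. e \<subseteq> ?V'" by auto
  define f where "f a = (if a = (0::nat) then (j,U1) else if a = 1 then (j,U2)
     else if a = 2 then (j,Vb i) else (j,Wb i))" for a
  have bij: "bij_betw f {0,1,2,3} ?V'"
    unfolding bij_betw_def inj_on_def f_def by auto
  have iff: "\<forall>a\<in>{0,1,2,3}. \<forall>b\<in>{0,1,2,3}. {a,b} \<in> {{0,1},{1,2},{2,3},{3,0::nat}} \<longleftrightarrow> {f a, f b} \<in> ?E'"
    by (simp add: f_def doubleton_eq_iff)
  have "graph_iso (cycle_V 4) (cycle_E 4) ?V' ?E'"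
    unfolding graph_iso_def cycV4 cycE4 using bij sub iff by blast
  then show ?thesis using Vs Es sub unfolding iso_subgraphs_def by blast
qed

lemma lv_pair:
  assumes "1 \<le> i" "i \<le> n"
  shows "lv n (Vb i) + lv n (Wb i) + (i-1) = 5*(n div 2) + n mod 2"
proof -
  have ns: "n = 2*(n div 2) + n mod 2" by simp
  have r: "n mod 2 \<le> 1" by simp
  from assms(1) show ?thesis
  proof (cases rule: idx_cases)
    case (1 t)
    have "t \<le> n div 2" using assms(2) 1 ns r by linarith
    moreover have "lv n (Vb i) + lv n (Wb i) + (i-1) = (2*(n div 2) - t) + (3*(n div 2) + n mod 2 - t) + 2*t"
      unfolding 1 lv_V_even lv_W_even by simp
    ultimately show ?thesis by linarith
  next
    case (2 t)
    have "t + 1 \<le> n div 2" using assms(2) 2 ns r by linarith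
    moreover have "lv n (Vb i) + lv n (Wb i) + (i-1) = (n div 2 - 1 - t) + (4*(n div 2) + n mod 2 - t) + (2*t+1)"
      unfolding 2 lv_V_odd lv_W_odd by simp
    ultimately show ?thesis by linarith
  qed
qed

lemma arith_id:
  fixes A B L i j m n :: nat
  assumes "1 \<le> j" "j \<le> m" "1 \<le> i" "i \<le> n"
  shows "(m*L + (j-1) + 1) + ((m*(2*n+1) + (m-j) + 1) + ((m*A + (j-1) + 1) + (m*B + (m-j) + 1)))
    + ((m*(2*n+2) + m*(3*n) + (m-j) + 1) + ((m*(2*n+2) + m*(i-1) + (j-1) + 1)
    + ((m*(2*n+2) + m*(2*n-i) + (m-j) + 1) + (m*(2*n+2) + m*(2*n+i-1) + (j-1) + 1))))
    = m*(L + 9*n + (A + B + (i-1))) + 4*(m*(2*n+2)) + 4*(m-1) + 8"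
proof -
  define j' where "j' = j - 1"
  define k where "k = m - j"
  define i' where "i' = i - 1"
  define l where "l = n - i"
  have e: "j - 1 = j'" "m - j = k" "i - 1 = i'" "2*n - i = i' + 1 + 2*l" "2*n + i - 1 = 2*n + i'"
    "m - 1 = j' + k" using assms unfolding j'_def k_def i'_def l_def by simp_all
  have mn: "m = j' + 1 + k" "n = i' + 1 + l" using assms unfolding j'_def k_def i'_def l_def by simp_all
  show ?thesis unfolding e unfolding mn by (simp add: algebra_simps)
qed

definition cst :: "nat \<Rightarrow> nat \<Rightarrow> nat" where
  "cst m n = m*(lvU1 n + 9*n + (5*(n div 2) + n mod 2)) + 4*(m*(2*n+2)) + 4*(m-1) + 8"

lemma inj_imPair: "inj_on (image (Pair j)) Y"
proof (rule inj_onI)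
  fix A B assume "Pair j ` A = Pair j ` B"
  then have "snd ` Pair j ` A = snd ` Pair j ` B" by simp
  then show "A = B" by (simp add: image_image)
qed

lemma cycle_sum:
  assumes j: "j \<in> {1..m}" and i: "i \<in> {1..n}"
  shows "(\<Sum>v\<in>Pair j ` {U1,U2,Vb i,Wb i}. lam m n (Inl v))
    + (\<Sum>e\<in>image (Pair j) ` {{U1,U2},{U1,Wb i},{U2,Vb i},{Vb i,Wb i}}. lam m n (Inr e)) = cst m n"
proof -
  have s1: "(\<Sum>v\<in>Pair j ` {U1,U2,Vb i,Wb i}. lam m n (Inl v)) =
     vlab m n (j,U1) + (vlab m n (j,U2) + (vlab m n (j,Vb i) + vlab m n (j,Wb i)))"
    by (simp add: sum.reindex inj_on_def lam_def)
  have s2: "(\<Sum>e\<in>image (Pair j) ` {{U1,U2},{U1,Wb i},{U2,Vb i},{Vb i,Wb i}}. lam m n (Inr e)) =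
     (\<Sum>e\<in>{{U1,U2},{U1,Wb i},{U2,Vb i},{Vb i,Wb i}}. elab m n (Pair j ` e))"
    unfolding sum.reindex[OF inj_imPair] by (simp add: lam_def)
  also have "\<dots> = elab m n (Pair j ` {U1,U2}) + (elab m n (Pair j ` {U1,Wb i})
      + (elab m n (Pair j ` {U2,Vb i}) + elab m n (Pair j ` {Vb i,Wb i})))"
    by (simp add: doubleton_eq_iff)
  finally have s2': "(\<Sum>e\<in>image (Pair j) ` {{U1,U2},{U1,Wb i},{U2,Vb i},{Vb i,Wb i}}. lam m n (Inr e)) =
     elab m n (Pair j ` {U1,U2}) + (elab m n (Pair j ` {U1,Wb i})
      + (elab m n (Pair j ` {U2,Vb i}) + elab m n (Pair j ` {Vb i,Wb i})))" .
  have v1: "vlab m n (j,U1) = m*lvU1 n + (j-1) + 1" by (simp add: vlab_def slot_def)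
  have v2: "vlab m n (j,U2) = m*(2*n+1) + (m-j) + 1" by (simp add: vlab_def slot_def)
  have v3: "vlab m n (j,Vb i) = m*lv n (Vb i) + (j-1) + 1" by (simp add: vlab_def slot_def del: lv.simps)
  have v4: "vlab m n (j,Wb i) = m*lv n (Wb i) + (m-j) + 1" by (simp add: vlab_def slot_def del: lv.simps)
  have h1: "elab m n (Pair j ` {U1,U2}) = m*(2*n+2) + m*(3*n) + (m-j) + 1"
    by (simp add: elab_pair le_h eplus_def slot_def del: insert_image image_insert)
  have h2: "elab m n (Pair j ` {U1,Wb i}) = m*(2*n+2) + m*(i-1) + (j-1) + 1"
    by (simp add: elab_pair le_1 eplus_def slot_def doubleton_eq_iff del: insert_image image_insert)
  have h3: "elab m n (Pair j ` {U2,Vb i}) = m*(2*n+2) + m*(2*n-i) + (m-j) + 1"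
    by (simp add: elab_pair le_2 eplus_def slot_def doubleton_eq_iff del: insert_image image_insert)
  have h4: "elab m n (Pair j ` {Vb i,Wb i}) = m*(2*n+2) + m*(2*n+i-1) + (j-1) + 1"
    by (simp add: elab_pair le_3 eplus_def slot_def doubleton_eq_iff del: insert_image image_insert)
  have lp: "lv n (Vb i) + lv n (Wb i) + (i-1) = 5*(n div 2) + n mod 2" using i lv_pair by simp
  have ai: "1 \<le> j" "j \<le> m" "1 \<le> i" "i \<le> n" using i j by auto
  show ?thesis unfolding s1 s2' v1 v2 v3 v4 h1 h2 h3 h4 cst_def
    using arith_id[OF ai, of "lvU1 n" "lv n (Vb i)" "lv n (Wb i)"] unfolding lp .
qed

theorem theorem7:
  fixes m n :: nat
  assumes "m \<ge> 2" and "n \<ge> 2"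
  shows "H_supermagic (cycle_V 4) (cycle_E 4)
           (copies_V m (book_V n)) (copies_E m (book_E n))"
proof -
  let ?V = "copies_V m (book_V n)" and ?E = "copies_E m (book_E n)"
  let ?I = "iso_subgraphs (cycle_V 4) (cycle_E 4) ?V ?E"
  have cov: "H_covering (cycle_V 4) (cycle_E 4) ?V ?E" unfolding H_covering_def
  proof
    fix e assume "e \<in> ?E"
    then obtain j e' where j: "j \<in> {1..m}" and e': "e' \<in> book_E n" and ee: "e = Pair j ` e'"
      unfolding copies_E_gE gE_def by auto
    obtain i where i: "i \<in> {1..n}" and ei: "e' \<in> {{U1,U2},{U1,Wb i},{U2,Vb i},{Vb i,Wb i}}"
    proof -
      from e' consider "e' = {U1,U2}" | i where "i \<in> {1..n}" "e' = {U1,Wb i} \<or> e' = {U2,Vb i} \<or> e' = {Vb i,Wb i}"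
        unfolding book_E_mem by blast
      then show ?thesis
      proof cases
        case 1
        have "(1::nat) \<in> {1..n}" using assms(2) by simp
        then show ?thesis using 1 that by blast
      next
        case (2 i)
        then show ?thesis using that by blast
      qed
    qed
    have eE: "e \<in> image (Pair j) ` {{U1,U2},{U1,Wb i},{U2,Vb i},{Vb i,Wb i}}" using ei ee by blast
    show "\<exists>(V', E')\<in>?I. e \<in> E'"
      by (rule bexI[OF _ std_iso[OF j i]]) (simp only: case_prod_conv eE)
  qed
  have mag: "\<forall>(V', E')\<in>?I. (\<Sum>v\<in>V'. lam m n (Inl v)) + (\<Sum>e\<in>E'. lam m n (Inr e)) = cst m n"
  proof (clarify)
    fix V' E' assume "(V', E') \<in> ?I"
    then obtain j i where j: "j \<in> {1..m}" and i: "i \<in> {1..n}" and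
      V': "V' = Pair j ` {U1,U2,Vb i,Wb i}" and
      E': "E' = image (Pair j) ` {{U1,U2},{U1,Wb i},{U2,Vb i},{Vb i,Wb i}}"
      using C4_char by blast
    show "(\<Sum>v\<in>V'. lam m n (Inl v)) + (\<Sum>e\<in>E'. lam m n (Inr e)) = cst m n"
      unfolding V' E' by (rule cycle_sum[OF j i])
  qed
  have "H_supermagic_labeling (cycle_V 4) (cycle_E 4) ?V ?E (lam m n)"
    unfolding H_supermagic_labeling_def H_magic_labeling_def
    using lam_bij lam_V mag by blast
  then show ?thesis using cov unfolding H_supermagic_def by blast
qed

end
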